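(* Let $G,H$ be finite groups and $U\leq G\times H$ a subdirect product. Suppose that for each prime divisor $p$ of $|q(U)|$ the Sylow $p$-subgroups of $q(U)$ are cyclic. Then $U$ is extensible.
   Context: For $U\leq G\times H$: $p_1(U)=\{g:\exists h,(g,h)\in U\}$, $p_2(U)=\{h:\exists g,(g,h)\in U\}$, $k_1(U)=\{g:(g,1)\in U\}$; $U$ is a subdirect product if $p_1(U)=G$, $p_2(U)=H$; the Goursat quotient is $q(U)=p_1(U)/k_1(U)$. An abelian group $A$ satisfies the Hypothesis (with set of primes $\pi$) if there is a unique set of primes $\pi$ such that for every $n\in\mathbb{N}$ the $n$-torsion part of $A$ is cyclic of order $n_\pi$ (the $\pi$-part of $n$). $U$ is $A$-extensible if every homomorphism $U\to A$ extends to a homomorphism $G\times H\to A$; $U$ is extensible if it is $A$-extensible for every abelian group $A$ satisfying the Hypothesis. *)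

theory Defs
  imports "HOL-Algebra.Algebra" "HOL-Computational_Algebra.Primes"
begin

definition proj1 :: "('a \<times> 'b) set \<Rightarrow> 'a set" where
  "proj1 U = {g. \<exists>h. (g, h) \<in> U}"

definition proj2 :: "('a \<times> 'b) set \<Rightarrow> 'b set" where
  "proj2 U = {h. \<exists>g. (g, h) \<in> U}"

definition ker1 :: "('b, 'm) monoid_scheme \<Rightarrow> ('a \<times> 'b) set \<Rightarrow> 'a set" where
  "ker1 H U = {g. (g, \<one>\<^bsub>H\<^esub>) \<in> U}"

definition subdirect ::
  "('a, 'm) monoid_scheme \<Rightarrow> ('b, 'n) monoid_scheme \<Rightarrow> ('a \<times> 'b) set \<Rightarrow> bool" where
  "subdirect G H U \<longleftrightarrow> subgroup U (G \<times>\<times> H) \<and> proj1 U = carrier G \<and> proj2 U = carrier H"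

definition goursat_quot ::
  "('a, 'm) monoid_scheme \<Rightarrow> ('b, 'n) monoid_scheme \<Rightarrow> ('a \<times> 'b) set \<Rightarrow> 'a set monoid" where
  "goursat_quot G H U = (G\<lparr>carrier := proj1 U\<rparr>) Mod (ker1 H U)"

definition sylow_subgroup :: "('a, 'm) monoid_scheme \<Rightarrow> nat \<Rightarrow> 'a set \<Rightarrow> bool" where
  "sylow_subgroup Q p P \<longleftrightarrow> subgroup P Q \<and> card P = p ^ multiplicity p (order Q)"

definition pi_part :: "nat set \<Rightarrow> nat \<Rightarrow> nat" where
  "pi_part \<pi> n = (\<Prod>p \<in> prime_factors n \<inter> \<pi>. p ^ multiplicity p n)"

definition torsion_part :: "('c, 'm) monoid_scheme \<Rightarrow> nat \<Rightarrow> 'c set" where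
  "torsion_part A n = {a \<in> carrier A. a [^]\<^bsub>A\<^esub> n = \<one>\<^bsub>A\<^esub>}"

definition hypothesis_with :: "('c, 'm) monoid_scheme \<Rightarrow> nat set \<Rightarrow> bool" where
  "hypothesis_with A \<pi> \<longleftrightarrow> \<pi> \<subseteq> {p. Factorial_Ring.prime p} \<and>
     (\<forall>n::nat. n > 0 \<longrightarrow> cyclic_group (A\<lparr>carrier := torsion_part A n\<rparr>)
                         \<and> card (torsion_part A n) = pi_part \<pi> n)"

definition satisfies_hypothesis :: "('c, 'm) monoid_scheme \<Rightarrow> bool" where
  "satisfies_hypothesis A \<longleftrightarrow> comm_group A \<and> (\<exists>!\<pi>. hypothesis_with A \<pi>)"

definition A_extensible ::
  "('a, 'm) monoid_scheme \<Rightarrow> ('b, 'n) monoid_scheme \<Rightarrow> ('c, 'k) monoid_scheme \<Rightarrow> ('a \<times> 'b) set \<Rightarrow> bool" where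
  "A_extensible G H A U \<longleftrightarrow>
     (\<forall>f \<in> hom ((G \<times>\<times> H)\<lparr>carrier := U\<rparr>) A.
        \<exists>\<phi> \<in> hom (G \<times>\<times> H) A. \<forall>u \<in> U. \<phi> u = f u)"

end

theory Submission
  imports Defs
begin

lemma pi_part_pos: "pi_part \<pi> n > 0"
  unfolding pi_part_def by (intro prod_pos) (auto intro: prime_gt_0_nat in_prime_factors_imp_prime)

lemma pi_part_mult:
  assumes "n > 0" "N > 0"
  shows "pi_part \<pi> (n * N) = pi_part \<pi> n * pi_part \<pi> N"
proof -
  define F where "F = prime_factors (n * N) \<inter> \<pi>"
  have finF: "finite F" unfolding F_def by auto
  have pfF: "prime_factors (n * N) = prime_factors n \<union> prime_factors N"
    using assms by (simp add: prime_factors_product)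
  have e: "pi_part \<pi> m = (\<Prod>p\<in>F. p ^ multiplicity p m)" if m: "m = n \<or> m = N" for m
  proof -
    have "pi_part \<pi> m = (\<Prod>p\<in>prime_factors m \<inter> \<pi>. p ^ multiplicity p m)"
      by (simp add: pi_part_def)
    also have "\<dots> = (\<Prod>p\<in>F. p ^ multiplicity p m)"
    proof (rule prod.mono_neutral_left[OF finF])
      show "prime_factors m \<inter> \<pi> \<subseteq> F" using m pfF F_def by auto
      show "\<forall>i\<in>F - prime_factors m \<inter> \<pi>. i ^ multiplicity i m = 1"
      proof
        fix p assume p: "p \<in> F - prime_factors m \<inter> \<pi>"
        then have "Factorial_Ring.prime p" "p \<in> \<pi>" unfolding F_def by auto
        with p have "\<not> p dvd m" using m assms by (auto simp: F_def in_prime_factors_iff)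
        then show "p ^ multiplicity p m = 1" by (simp add: not_dvd_imp_multiplicity_0)
      qed
    qed
    finally show ?thesis .
  qed
  have "pi_part \<pi> (n * N) = (\<Prod>p\<in>F. p ^ multiplicity p (n * N))"
    by (simp add: pi_part_def F_def)
  also have "\<dots> = (\<Prod>p\<in>F. p ^ multiplicity p n * p ^ multiplicity p N)"
  proof (rule prod.cong[OF refl])
    fix p assume "p \<in> F"
    then have "Factorial_Ring.prime p" unfolding F_def by auto
    then show "p ^ multiplicity p (n * N) = p ^ multiplicity p n * p ^ multiplicity p N"
      using assms by (simp add: prime_elem_multiplicity_mult_distrib power_add)
  qed
  also have "\<dots> = pi_part \<pi> n * pi_part \<pi> N"
    by (simp add: prod.distrib e)
  finally show ?thesis .
qed

lemma (in comm_group) torsion_subgroup: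
  shows "subgroup (torsion_part G m) G"
proof
  show "torsion_part G m \<subseteq> carrier G" by (auto simp: torsion_part_def)
  show "\<And>x y. x \<in> torsion_part G m \<Longrightarrow> y \<in> torsion_part G m \<Longrightarrow> x \<otimes> y \<in> torsion_part G m"
    by (auto simp: torsion_part_def nat_pow_distrib)
  show "\<one> \<in> torsion_part G m" by (auto simp: torsion_part_def)
  show "\<And>x. x \<in> torsion_part G m \<Longrightarrow> inv x \<in> torsion_part G m"
    by (auto simp: torsion_part_def nat_pow_inv)
qed

lemma (in comm_group) divisible:
  assumes hyp: "hypothesis_with G \<pi>" and b: "b \<in> carrier G" "b [^] (N::nat) = \<one>" "N > 0"
    and n: "(n::nat) > 0"
  shows "\<exists>a \<in> carrier G. a [^] n = b"
proof -
  define T where "T = torsion_part G (n * N)"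
  define f where "f = (\<lambda>x. x [^] n)"
  have cardT: "card T = pi_part \<pi> n * pi_part \<pi> N"
    using hyp n b(3) unfolding T_def hypothesis_with_def by (simp add: pi_part_mult)
  have cardN: "card (torsion_part G N) = pi_part \<pi> N"
    using hyp n b(3) unfolding hypothesis_with_def by simp
  have cardn: "card (torsion_part G n) = pi_part \<pi> n"
    using hyp n b(3) unfolding hypothesis_with_def by simp
  have finN: "finite (torsion_part G N)"
    using cardN pi_part_pos by (metis card.infinite less_not_refl)
  have finT: "finite T"
    using cardT pi_part_pos by (metis card.infinite mult_pos_pos less_not_refl)
  have sT: "subgroup T G" unfolding T_def by (rule torsion_subgroup)
  interpret TG: group "G\<lparr>carrier := T\<rparr>" by (rule subgroup_imp_group[OF sT])
  have hom: "group_hom (G\<lparr>carrier := T\<rparr>) G f"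
  proof (unfold_locales)
    show "f \<in> hom (G\<lparr>carrier := T\<rparr>) G"
      using sT by (auto intro!: homI simp: f_def nat_pow_distrib subgroup.mem_carrier)
  qed
  interpret h: group_hom "G\<lparr>carrier := T\<rparr>" G f by (rule hom)
  have img_sub: "subgroup (f ` T) G" using h.img_is_subgroup by simp
  interpret h2: group_hom "G\<lparr>carrier := T\<rparr>" "G\<lparr>carrier := f ` T\<rparr>" f
    unfolding group_hom_def group_hom_axioms_def
    using subgroup_imp_group[OF img_sub] TG.is_group sT
    by (auto intro!: homI simp: f_def nat_pow_distrib subgroup.mem_carrier)
  have ker: "kernel (G\<lparr>carrier := T\<rparr>) (G\<lparr>carrier := f ` T\<rparr>) f = torsion_part G n"
  proof -
    have "x [^] (n * N) = \<one>" if "x \<in> carrier G" "x [^] n = \<one>" for x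
      using that by (simp add: nat_pow_pow[symmetric])
    then show ?thesis unfolding kernel_def T_def torsion_part_def f_def by auto
  qed
  have iso: "(\<lambda>Y. the_elem (f ` Y)) \<in> Group.iso ((G\<lparr>carrier := T\<rparr>) Mod (torsion_part G n)) (G\<lparr>carrier := f ` T\<rparr>)"
    using h2.FactGroup_iso_set ker by simp
  have "card (f ` T) = order ((G\<lparr>carrier := T\<rparr>) Mod (torsion_part G n))"
    using iso_same_order[OF iso] by (simp add: order_def)
  also have "\<dots> = card (rcosets\<^bsub>G\<lparr>carrier := T\<rparr>\<^esub> (torsion_part G n))"
    by (simp add: order_def FactGroup_def)
  finally have c1: "card (f ` T) = card (rcosets\<^bsub>G\<lparr>carrier := T\<rparr>\<^esub> (torsion_part G n))" .
  have "subgroup (torsion_part G n) (G\<lparr>carrier := T\<rparr>)"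
    using h2.subgroup_kernel ker by simp
  then have "card (rcosets\<^bsub>G\<lparr>carrier := T\<rparr>\<^esub> (torsion_part G n)) * card (torsion_part G n) = card T"
    using TG.lagrange by (simp add: order_def)
  with c1 cardT cardn pi_part_pos have cf: "card (f ` T) = pi_part \<pi> N"
    by (metis mult.commute mult_right_cancel less_not_refl)
  have sub: "f ` T \<subseteq> torsion_part G N"
  proof
    fix y assume "y \<in> f ` T"
    then obtain x where x: "x \<in> T" "y = f x" by auto
    then show "y \<in> torsion_part G N"
      unfolding T_def torsion_part_def f_def by (auto simp: nat_pow_pow)
  qed
  have "f ` T = torsion_part G N"
    using card_subset_eq[OF finN sub] cf cardN by simp
  moreover have "b \<in> torsion_part G N" using b by (simp add: torsion_part_def)
  ultimately obtain a where "a \<in> T" "b = f a" by auto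
  then show ?thesis using sT subgroup.mem_carrier f_def by metis
qed

definition hom_on :: "('a,'m) monoid_scheme \<Rightarrow> ('c,'k) monoid_scheme \<Rightarrow> 'a set \<Rightarrow> ('a \<Rightarrow> 'c) \<Rightarrow> bool" where
  "hom_on G A K l \<longleftrightarrow> (\<forall>x\<in>K. l x \<in> carrier A) \<and> (\<forall>x\<in>K. \<forall>y\<in>K. l (x \<otimes>\<^bsub>G\<^esub> y) = l x \<otimes>\<^bsub>A\<^esub> l y)"

definition divis :: "('c,'k) monoid_scheme \<Rightarrow> bool" where
  "divis A \<longleftrightarrow> (\<forall>b\<in>carrier A. \<forall>N::nat. N > 0 \<longrightarrow> b [^]\<^bsub>A\<^esub> N = \<one>\<^bsub>A\<^esub> \<longrightarrow>
      (\<forall>n::nat. n > 0 \<longrightarrow> (\<exists>a\<in>carrier A. a [^]\<^bsub>A\<^esub> n = b)))"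

lemma hom_on_hom: "subgroup K G \<Longrightarrow> hom_on G A K l \<longleftrightarrow> l \<in> hom (G\<lparr>carrier := K\<rparr>) A"
  unfolding hom_on_def hom_def by auto

lemma (in group) hom_on_int_pow:
  assumes "subgroup K G" "group A" "hom_on G A K l" "k \<in> K"
  shows "l (k [^] (i::int)) = l k [^]\<^bsub>A\<^esub> i"
proof -
  have "l \<in> hom (G\<lparr>carrier := K\<rparr>) A" using assms hom_on_hom by blast
  from hom_int_pow[OF this _ subgroup_imp_group[OF assms(1)] assms(2)] assms(4)
  show ?thesis using int_pow_consistent[OF assms(1,4)] by simp
qed

lemma (in group) hom_on_nat_pow:
  assumes "subgroup K G" "group A" "hom_on G A K l" "k \<in> K"
  shows "l (k [^] (i::nat)) = l k [^]\<^bsub>A\<^esub> i"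
  using hom_on_int_pow[OF assms, of "int i"] by (simp add: int_pow_int)

lemma (in group) hom_on_one:
  assumes "subgroup K G" "group A" "hom_on G A K l"
  shows "l \<one> = \<one>\<^bsub>A\<^esub>"
  using hom_on_nat_pow[OF assms subgroup.one_closed[OF assms(1)], of 0] by simp

lemma (in group) cyc_ext:
  assumes fin: "finite (carrier G)" and A: "comm_group A" and D: "divis A"
    and P: "subgroup P G" and KP: "K \<subseteq> P" and Kn: "K \<lhd> G"
    and lam: "hom_on G A K l"
    and linv: "\<forall>x\<in>carrier G. \<forall>k\<in>K. l (x \<otimes> k \<otimes> inv x) = l k"
    and g: "g \<in> P" and gen: "\<forall>x\<in>P. \<exists>i::int. x \<otimes> g [^] (-i) \<in> K"
  shows "\<exists>\<mu>. hom_on G A P \<mu> \<and> (\<forall>k\<in>K. \<mu> k = l k)"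
proof -
  interpret A: comm_group A by fact
  interpret N: normal K G by fact
  have sK: "subgroup K G" by (rule normal_imp_subgroup[OF Kn])
  have gG: "g \<in> carrier G" by (rule subgroup.mem_carrier[OF P g])
  have PG: "x \<in> P \<Longrightarrow> x \<in> carrier G" for x by (rule subgroup.mem_carrier[OF P])
  have KG: "x \<in> K \<Longrightarrow> x \<in> carrier G" for x by (rule subgroup.mem_carrier[OF sK])
  have lA: "x \<in> K \<Longrightarrow> l x \<in> carrier A" for x using lam unfolding hom_on_def by blast
  have lmult: "x \<in> K \<Longrightarrow> y \<in> K \<Longrightarrow> l (x \<otimes> y) = l x \<otimes>\<^bsub>A\<^esub> l y" for x y
    using lam unfolding hom_on_def by blast
  define S where "S = {n::nat. 0 < n \<and> g [^] n \<in> K}"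
  have o0: "0 < order G" by (rule order_gt_0_iff_finite[THEN iffD2, OF fin])
  have "g [^] order G \<in> K" unfolding pow_order_eq_1[OF gG] by (rule subgroup.one_closed[OF sK])
  then have "order G \<in> S" unfolding S_def using o0 by blast
  define n where "n = (LEAST n. n \<in> S)"
  have nS: "n \<in> S" unfolding n_def by (rule LeastI) fact
  then have n0: "0 < n" and gn: "g [^] n \<in> K" by (auto simp: S_def)
  have nmin: "\<And>m. 0 < m \<Longrightarrow> m < n \<Longrightarrow> g [^] m \<notin> K"
  proof -
    fix m :: nat assume "0 < m" "m < n"
    then have "m \<notin> S" using not_less_Least[of m "\<lambda>n. n \<in> S"] n_def by simp
    then show "g [^] m \<notin> K" using \<open>0 < m\<close> S_def by simp
  qed
  have key: "g [^] m \<in> K \<longleftrightarrow> int n dvd m" for m :: int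
  proof
    assume "int n dvd m"
    then obtain t where t: "m = int n * t" by (auto elim: dvdE)
    have "g [^] m = (g [^] (int n)) [^] t" using t gG by (simp add: int_pow_pow)
    then have "g [^] m = (g [^] n) [^] t" by (simp only: int_pow_int)
    then show "g [^] m \<in> K" using subgroup_int_pow_closed[OF sK gn] by simp
  next
    assume gm: "g [^] m \<in> K"
    define r where "r = m mod int n"
    define t where "t = m div int n"
    have m: "m = int n * t + r" unfolding r_def t_def by simp
    have r0: "0 \<le> r" "r < int n" using n0 unfolding r_def by auto
    have "g [^] m = g [^] (int n * t) \<otimes> g [^] r" using m gG int_pow_mult by simp
    then have "g [^] r = inv (g [^] (int n * t)) \<otimes> g [^] m"
      using gG by (simp add: inv_solve_left)
    moreover have "g [^] (int n * t) \<in> K"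
    proof -
      have "g [^] (int n * t) = (g [^] (int n)) [^] t" using gG by (simp add: int_pow_pow)
      then have "g [^] (int n * t) = (g [^] n) [^] t" by (simp only: int_pow_int)
      then show ?thesis using subgroup_int_pow_closed[OF sK gn] by simp
    qed
    ultimately have grK: "g [^] r \<in> K" using gm sK by (simp add: subgroup.m_closed subgroup.m_inv_closed)
    have "r = 0"
    proof (rule ccontr)
      assume "r \<noteq> 0"
      with r0 have "0 < nat r" "nat r < n" by auto
      with nmin have "g [^] (nat r) \<notin> K" by blast
      moreover have "g [^] (nat r) = g [^] r"
        using int_pow_int[of G g "nat r"] r0 by simp
      ultimately show False using grK by simp
    qed
    then show "int n dvd m" using m by simp
  qed
  define b where "b = l (g [^] n)"
  have bA: "b \<in> carrier A" using lA gn b_def by simp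
  have "b [^]\<^bsub>A\<^esub> order G = \<one>\<^bsub>A\<^esub>"
    unfolding b_def using hom_on_nat_pow[OF sK A.is_group lam gn, of "order G"]
      pow_order_eq_1[of "g [^] n"] gG hom_on_one[OF sK A.is_group lam] by simp
  obtain a where aA: "a \<in> carrier A" and an: "a [^]\<^bsub>A\<^esub> n = b"
  proof -
    have "\<forall>N::nat. N > 0 \<longrightarrow> b [^]\<^bsub>A\<^esub> N = \<one>\<^bsub>A\<^esub> \<longrightarrow> (\<forall>n::nat. n > 0 \<longrightarrow> (\<exists>a\<in>carrier A. a [^]\<^bsub>A\<^esub> n = b))"
      using D bA unfolding divis_def by simp
    then have "\<exists>a\<in>carrier A. a [^]\<^bsub>A\<^esub> n = b" using n0 o0 \<open>b [^]\<^bsub>A\<^esub> order G = \<one>\<^bsub>A\<^esub>\<close> by simp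
    then show ?thesis using that by blast
  qed
  have lgt: "l (g [^] (int n * t)) = a [^]\<^bsub>A\<^esub> (int n * t)" for t :: int
  proof -
    have "g [^] (int n * t) = (g [^] (int n)) [^] t" using gG by (simp add: int_pow_pow)
    then have "l (g [^] (int n * t)) = l ((g [^] n) [^] t)" by (simp only: int_pow_int)
    also have "\<dots> = b [^]\<^bsub>A\<^esub> t" using hom_on_int_pow[OF sK A.is_group lam gn] b_def by simp
    also have "\<dots> = (a [^]\<^bsub>A\<^esub> (int n)) [^]\<^bsub>A\<^esub> t" using an by (simp only: int_pow_int)
    also have "\<dots> = a [^]\<^bsub>A\<^esub> (int n * t)" using aA by (simp add: A.int_pow_pow)
    finally show ?thesis .
  qed
  define i where "i x = (SOME i::int. x \<otimes> g [^] (-i) \<in> K)" for x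
  have iK: "x \<in> P \<Longrightarrow> x \<otimes> g [^] (- i x) \<in> K" for x
    unfolding i_def using gen by (metis (mono_tags, lifting) someI_ex)
  define \<mu> where "\<mu> x = a [^]\<^bsub>A\<^esub> (i x) \<otimes>\<^bsub>A\<^esub> l (x \<otimes> g [^] (- i x))" for x
  have wd: "\<mu> x = a [^]\<^bsub>A\<^esub> j \<otimes>\<^bsub>A\<^esub> l (x \<otimes> g [^] (- j))"
    if x: "x \<in> P" and j: "x \<otimes> g [^] (- j) \<in> K" for x and j :: int
  proof -
    define i0 where "i0 = i x"
    have k0: "x \<otimes> g [^] (- i0) \<in> K" using iK x i0_def by simp
    have xG: "x \<in> carrier G" using PG x by simp
    have eq: "x \<otimes> g [^] (- j) = (x \<otimes> g [^] (- i0)) \<otimes> g [^] (i0 - j)"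
      using gG xG by (simp add: m_assoc int_pow_mult[symmetric])
    then have "g [^] (i0 - j) = inv (x \<otimes> g [^] (- i0)) \<otimes> (x \<otimes> g [^] (- j))"
      using gG xG by (simp add: inv_solve_left)
    then have "g [^] (i0 - j) \<in> K" using j k0 sK by (simp add: subgroup.m_closed subgroup.m_inv_closed)
    then obtain t where t: "i0 - j = int n * t" using key by (auto elim: dvdE)
    have "l (x \<otimes> g [^] (- j)) = l (x \<otimes> g [^] (- i0)) \<otimes>\<^bsub>A\<^esub> a [^]\<^bsub>A\<^esub> (i0 - j)"
      using eq lmult[OF k0] lgt t \<open>g [^] (i0 - j) \<in> K\<close> by simp
    then have "a [^]\<^bsub>A\<^esub> j \<otimes>\<^bsub>A\<^esub> l (x \<otimes> g [^] (- j))
       = a [^]\<^bsub>A\<^esub> j \<otimes>\<^bsub>A\<^esub> a [^]\<^bsub>A\<^esub> (i0 - j) \<otimes>\<^bsub>A\<^esub> l (x \<otimes> g [^] (- i0))"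
      using lA[OF k0] aA by (simp add: A.m_ac)
    also have "\<dots> = a [^]\<^bsub>A\<^esub> i0 \<otimes>\<^bsub>A\<^esub> l (x \<otimes> g [^] (- i0))"
      using aA by (simp add: A.int_pow_mult[symmetric])
    finally show ?thesis unfolding \<mu>_def i0_def by simp
  qed
  have "hom_on G A P \<mu>"
    unfolding hom_on_def
  proof (intro conjI ballI)
    fix x assume x: "x \<in> P"
    show "\<mu> x \<in> carrier A" unfolding \<mu>_def using aA lA[OF iK[OF x]] by simp
  next
    fix x y assume x: "x \<in> P" and y: "y \<in> P"
    define i1 where "i1 = i x"
    define j1 where "j1 = i y"
    have k1: "x \<otimes> g [^] (- i1) \<in> K" using iK x i1_def by simp
    have k2: "y \<otimes> g [^] (- j1) \<in> K" using iK y j1_def by simp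
    have xG: "x \<in> carrier G" and yG: "y \<in> carrier G" using PG x y by auto
    define c where "c = g [^] i1 \<otimes> (y \<otimes> g [^] (- j1)) \<otimes> inv (g [^] i1)"
    have cK: "c \<in> K" unfolding c_def using N.inv_op_closed2 k2 gG by simp
    have lc: "l c = l (y \<otimes> g [^] (- j1))" unfolding c_def using linv k2 gG by simp
    have eq: "x \<otimes> y \<otimes> g [^] (- (i1 + j1)) = (x \<otimes> g [^] (- i1)) \<otimes> c"
    proof -
      have "inv (g [^] i1) = g [^] (- i1)" using gG by (simp add: int_pow_neg)
      moreover have "g [^] (- (i1 + j1)) = g [^] (- j1) \<otimes> g [^] (- i1)"
        using gG by (simp add: int_pow_mult[symmetric] add.commute)
      moreover have "g [^] (- i1) \<otimes> (g [^] i1 \<otimes> z) = z" if "z \<in> carrier G" for z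
        using gG that by (simp add: m_assoc[symmetric] int_pow_mult[symmetric])
      ultimately show ?thesis unfolding c_def using gG xG yG by (simp add: m_assoc)
    qed
    have xyK: "x \<otimes> y \<otimes> g [^] (- (i1 + j1)) \<in> K" using eq k1 cK sK by (simp add: subgroup.m_closed)
    have "\<mu> (x \<otimes> y) = a [^]\<^bsub>A\<^esub> (i1 + j1) \<otimes>\<^bsub>A\<^esub> l (x \<otimes> y \<otimes> g [^] (- (i1 + j1)))"
      using wd[OF _ xyK] x y P by (simp add: subgroup.m_closed)
    also have "\<dots> = a [^]\<^bsub>A\<^esub> i1 \<otimes>\<^bsub>A\<^esub> a [^]\<^bsub>A\<^esub> j1 \<otimes>\<^bsub>A\<^esub>
        (l (x \<otimes> g [^] (- i1)) \<otimes>\<^bsub>A\<^esub> l (y \<otimes> g [^] (- j1)))"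
      using eq lmult[OF k1 cK] lc aA by (simp add: A.int_pow_mult)
    also have "\<dots> = \<mu> x \<otimes>\<^bsub>A\<^esub> \<mu> y"
      unfolding \<mu>_def i1_def[symmetric] j1_def[symmetric] using aA lA[OF k1] lA[OF k2]
      by (simp add: A.m_ac)
    finally show "\<mu> (x \<otimes> y) = \<mu> x \<otimes>\<^bsub>A\<^esub> \<mu> y" .
  qed
  moreover have "\<forall>k\<in>K. \<mu> k = l k"
  proof
    fix k assume k: "k \<in> K"
    have "\<mu> k = a [^]\<^bsub>A\<^esub> (0::int) \<otimes>\<^bsub>A\<^esub> l (k \<otimes> g [^] (- 0::int))"
      using wd[of k 0] k KP KG by auto
    then show "\<mu> k = l k" using k KG lA by simp
  qed
  ultimately show ?thesis by blast
qed

lemma (in group) transfer: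
  assumes fin: "finite (carrier G)" and A: "comm_group A"
    and P: "subgroup P G" and KP: "K \<subseteq> P" and Kn: "K \<lhd> G"
    and mu: "hom_on G A P \<mu>"
    and linv: "\<forall>x\<in>carrier G. \<forall>k\<in>K. \<mu> (x \<otimes> k \<otimes> inv x) = \<mu> k"
  shows "\<exists>V \<in> hom G A. \<forall>k\<in>K. V k = \<mu> k [^]\<^bsub>A\<^esub> card (rcosets P)"
proof -
  interpret A: comm_group A by fact
  interpret N: normal K G by fact
  interpret PS: subgroup P G by fact
  have PG: "x \<in> P \<Longrightarrow> x \<in> carrier G" for x by (rule subgroup.mem_carrier[OF P])
  have KPG: "P \<subseteq> carrier G" by (rule PS.subset)
  have muA: "x \<in> P \<Longrightarrow> \<mu> x \<in> carrier A" for x using mu unfolding hom_on_def by blast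
  have mumult: "x \<in> P \<Longrightarrow> y \<in> P \<Longrightarrow> \<mu> (x \<otimes> y) = \<mu> x \<otimes>\<^bsub>A\<^esub> \<mu> y" for x y
    using mu unfolding hom_on_def by blast
  define R where "R = rcosets P"
  have finR: "finite R"
    unfolding R_def using rcosets_subset_PowG[OF P] fin by (rule finite_subset[OF _ finite_Pow_iff[THEN iffD2]])
  define rep where "rep C = (SOME t. t \<in> C)" for C :: "'a set"
  have rep: "rep C \<in> C" "rep C \<in> carrier G" "P #> rep C = C" if C: "C \<in> R" for C
  proof -
    obtain x where x: "x \<in> carrier G" "C = P #> x" using C unfolding R_def RCOSETS_def by blast
    have "x \<in> C" using rcos_self[OF x(1) P] x(2) by simp
    then show r1: "rep C \<in> C" unfolding rep_def by (rule someI)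
    then have "rep C \<in> P #> x" using x by simp
    then show "rep C \<in> carrier G" using x(1) PS.rcos_module[OF is_group x(1)] by (metis PS.elemrcos_carrier is_group)
    show "P #> rep C = C" using repr_independence[OF \<open>rep C \<in> P #> x\<close> x(1) P] x(2) by simp
  qed
  have RC: "C \<subseteq> carrier G" if "C \<in> R" for C
    using PS.rcosets_carrier[OF is_group] that R_def by blast
  have Rmul: "C #> g \<in> R" "C #> g = P #> (rep C \<otimes> g)" if C: "C \<in> R" and g: "g \<in> carrier G" for C g
  proof -
    show eq: "C #> g = P #> (rep C \<otimes> g)" using coset_mult_assoc[OF KPG rep(2)[OF C] g] rep(3)[OF C] by simp
    show "C #> g \<in> R" unfolding eq R_def using rep(2)[OF C] g by (intro rcosetsI[OF KPG]) simp
  qed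
  define p where "p C g = rep C \<otimes> g \<otimes> inv (rep (C #> g))" for C g
  have pP: "p C g \<in> P" if C: "C \<in> R" and g: "g \<in> carrier G" for C g
  proof -
    have r: "rep (C #> g) \<in> P #> (rep C \<otimes> g)" using rep(1)[OF Rmul(1)[OF C g]] Rmul(2)[OF C g] by simp
    have rG: "rep (C #> g) \<in> carrier G" using rep(2)[OF Rmul(1)[OF C g]] .
    have cG: "rep C \<otimes> g \<in> carrier G" using rep(2)[OF C] g by simp
    have "rep (C #> g) \<otimes> inv (rep C \<otimes> g) \<in> P"
      using PS.rcos_module[OF is_group cG rG] r by simp
    then have "inv (rep (C #> g) \<otimes> inv (rep C \<otimes> g)) \<in> P" by (rule PS.m_inv_closed)
    then show ?thesis unfolding p_def using rG cG by (simp add: inv_mult_group)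
  qed
  have pmult: "p C (g \<otimes> h) = p C g \<otimes> p (C #> g) h"
    if C: "C \<in> R" and g: "g \<in> carrier G" and h: "h \<in> carrier G" for C g h
  proof -
    have CG: "C \<subseteq> carrier G" by (rule RC[OF C])
    have a: "(C #> g) #> h = C #> (g \<otimes> h)" by (rule coset_mult_assoc[OF CG g h])
    have r1: "rep C \<in> carrier G" by (rule rep(2)[OF C])
    have r2: "rep (C #> g) \<in> carrier G" by (rule rep(2)[OF Rmul(1)[OF C g]])
    have r3: "rep (C #> (g \<otimes> h)) \<in> carrier G" using rep(2)[OF Rmul(1)[OF C]] g h by simp
    have cancel: "inv a \<otimes> (a \<otimes> z) = z" if "a \<in> carrier G" "z \<in> carrier G" for a z
    proof -
      have "inv a \<otimes> (a \<otimes> z) = (inv a \<otimes> a) \<otimes> z" using that by (simp only: m_assoc inv_closed)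
      then show ?thesis using that by simp
    qed
    show ?thesis unfolding p_def a using r1 r2 r3 g h by (simp add: m_assoc cancel)
  qed
  define V where "V g = finprod A (\<lambda>C. \<mu> (p C g)) R" for g
  have fA: "(\<lambda>C. \<mu> (p C g)) \<in> R \<rightarrow> carrier A" if g: "g \<in> carrier G" for g
  proof (rule Pi_I)
    fix C assume "C \<in> R"
    then show "\<mu> (p C g) \<in> carrier A" by (rule muA[OF pP[OF _ g]])
  qed
  have shift: "finprod A (\<lambda>C. \<mu> (p (C #> g) h)) R = V h"
    if g: "g \<in> carrier G" and h: "h \<in> carrier G" for g h
  proof -
    have img: "(\<lambda>C. C #> g) ` R = R"
    proof
      show "(\<lambda>C. C #> g) ` R \<subseteq> R"
      proof (rule image_subsetI)
        fix C assume "C \<in> R" then show "C #> g \<in> R" by (rule Rmul(1)[OF _ g])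
      qed
      show "R \<subseteq> (\<lambda>C. C #> g) ` R"
      proof
        fix D assume D: "D \<in> R"
        show "D \<in> (\<lambda>C. C #> g) ` R"
        proof (rule image_eqI)
          show "D = (D #> inv g) #> g" using coset_mult_assoc[OF RC[OF D] inv_closed[OF g] g] RC[OF D] g
            by simp
          show "D #> inv g \<in> R" using Rmul(1)[OF D] g by simp
        qed
      qed
    qed
    have inj: "inj_on (\<lambda>C. C #> g) R"
    proof (rule inj_onI)
      fix C D assume C: "C \<in> R" and D: "D \<in> R" and e: "C #> g = D #> g"
      have c1: "(C #> g) #> inv g = C" using coset_mult_assoc[OF RC[OF C] g inv_closed[OF g]] RC[OF C] g
        by simp
      have c2: "(D #> g) #> inv g = D" using coset_mult_assoc[OF RC[OF D] g inv_closed[OF g]] RC[OF D] g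
        by simp
      show "C = D" by (metis c1 c2 e)
    qed
    have "V h = finprod A (\<lambda>C. \<mu> (p C h)) ((\<lambda>C. C #> g) ` R)"
      unfolding V_def img by (rule refl)
    also have "\<dots> = finprod A (\<lambda>C. \<mu> (p (C #> g) h)) R"
    proof (rule A.finprod_reindex[OF _ inj])
      show "(\<lambda>C. \<mu> (p C h)) \<in> (\<lambda>C. C #> g) ` R \<rightarrow> carrier A" unfolding img by (rule fA[OF h])
    qed
    finally show ?thesis by (rule sym)
  qed
  have Vhom: "V \<in> hom G A"
  proof (rule homI)
    fix g assume g: "g \<in> carrier G"
    show "V g \<in> carrier A" unfolding V_def using fA[OF g] by (rule A.finprod_closed)
  next
    fix g h assume g: "g \<in> carrier G" and h: "h \<in> carrier G"
    have "V (g \<otimes> h) = finprod A (\<lambda>C. \<mu> (p C g) \<otimes>\<^bsub>A\<^esub> \<mu> (p (C #> g) h)) R"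
      unfolding V_def
    proof (rule A.finprod_cong')
      show "(\<lambda>C. \<mu> (p C g) \<otimes>\<^bsub>A\<^esub> \<mu> (p (C #> g) h)) \<in> R \<rightarrow> carrier A"
        using muA pP Rmul(1) g h by (auto intro!: A.m_closed)
      fix C assume C: "C \<in> R"
      show "\<mu> (p C (g \<otimes> h)) = \<mu> (p C g) \<otimes>\<^bsub>A\<^esub> \<mu> (p (C #> g) h)"
        using pmult[OF C g h] mumult pP[OF C g] pP[OF Rmul(1)[OF C g] h] by simp
    qed simp
    also have "\<dots> = V g \<otimes>\<^bsub>A\<^esub> finprod A (\<lambda>C. \<mu> (p (C #> g) h)) R"
      unfolding V_def
      using A.finprod_multf[OF fA[OF g], of "\<lambda>C. \<mu> (p (C #> g) h)"] muA pP Rmul(1) g h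
      by (auto simp: Pi_def)
    also have "\<dots> = V g \<otimes>\<^bsub>A\<^esub> V h" using shift[OF g h] by simp
    finally show "V (g \<otimes> h) = V g \<otimes>\<^bsub>A\<^esub> V h" .
  qed
  have "V k = \<mu> k [^]\<^bsub>A\<^esub> card R" if k: "k \<in> K" for k
  proof -
    have kG: "k \<in> carrier G" using N.subset k by blast
    have kP: "k \<in> P" using KP k by blast
    have "\<mu> (p C k) = \<mu> k" if C: "C \<in> R" for C
    proof -
      have r: "rep C \<in> carrier G" by (rule rep(2)[OF C])
      have cK: "rep C \<otimes> k \<otimes> inv (rep C) \<in> K" by (rule N.inv_op_closed2[OF r k])
      have "rep C \<otimes> k \<in> P #> rep C"
        using PS.rcos_module[OF is_group r] cK KP r kG by auto
      then have "P #> rep C = P #> (rep C \<otimes> k)" by (rule repr_independence[OF _ r P])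
      then have "C #> k = C" using Rmul(2)[OF C kG] rep(3)[OF C] by simp
      then have "p C k = rep C \<otimes> k \<otimes> inv (rep C)" unfolding p_def by simp
      then show ?thesis using linv r k by simp
    qed
    then have "V k = finprod A (\<lambda>C. \<mu> k) R" unfolding V_def
      by (intro A.finprod_cong') (auto simp: muA[OF kP])
    also have "\<dots> = \<mu> k [^]\<^bsub>A\<^esub> card R" by (rule A.finprod_const[OF muA[OF kP]])
    finally show ?thesis .
  qed
  then show ?thesis using Vhom R_def by blast
qed

lemma (in group) ext_lemma:
  assumes fin: "finite (carrier G)" and A: "comm_group A" and D: "divis A"
    and Kn: "K \<lhd> G" and lam: "hom_on G A K l"
    and linv: "\<forall>x\<in>carrier G. \<forall>k\<in>K. l (x \<otimes> k \<otimes> inv x) = l k"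
    and syl: "\<And>q. Factorial_Ring.prime q \<Longrightarrow> q dvd card (rcosets K) \<Longrightarrow>
       (\<exists>P g. subgroup P G \<and> K \<subseteq> P \<and> g \<in> P \<and> (\<forall>x\<in>P. \<exists>i::int. x \<otimes> g [^] (-i) \<in> K) \<and>
          card (rcosets P) * q ^ multiplicity q (card (rcosets K)) = card (rcosets K))"
  shows "\<exists>\<alpha> \<in> hom G A. \<forall>k\<in>K. \<alpha> k = l k"
proof -
  interpret A: comm_group A by fact
  interpret N: normal K G by fact
  have sK: "subgroup K G" by (rule normal_imp_subgroup[OF Kn])
  have lA: "x \<in> K \<Longrightarrow> l x \<in> carrier A" for x using lam unfolding hom_on_def by blast
  define S where "S = {e::int. \<exists>\<alpha>\<in>hom G A. \<forall>k\<in>K. \<alpha> k = l k [^]\<^bsub>A\<^esub> e}"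
  have comb: "u * a + v * b \<in> S" if a: "a \<in> S" and b: "b \<in> S" for a b u v :: int
  proof -
    obtain \<alpha>1 where h1: "\<alpha>1 \<in> hom G A" and e1: "\<forall>k\<in>K. \<alpha>1 k = l k [^]\<^bsub>A\<^esub> a"
      using a unfolding S_def by blast
    obtain \<alpha>2 where h2: "\<alpha>2 \<in> hom G A" and e2: "\<forall>k\<in>K. \<alpha>2 k = l k [^]\<^bsub>A\<^esub> b"
      using b unfolding S_def by blast
    have c1: "\<alpha>1 x \<in> carrier A" if "x \<in> carrier G" for x using h1 that by (rule hom_in_carrier)
    have c2: "\<alpha>2 x \<in> carrier A" if "x \<in> carrier G" for x using h2 that by (rule hom_in_carrier)
    define \<alpha> where "\<alpha> x = \<alpha>1 x [^]\<^bsub>A\<^esub> u \<otimes>\<^bsub>A\<^esub> \<alpha>2 x [^]\<^bsub>A\<^esub> v" for x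
    have "\<alpha> \<in> hom G A"
    proof (rule homI)
      fix x assume "x \<in> carrier G"
      then show "\<alpha> x \<in> carrier A" unfolding \<alpha>_def using c1 c2 by simp
    next
      fix x y assume x: "x \<in> carrier G" and y: "y \<in> carrier G"
      have "\<alpha> (x \<otimes> y) = (\<alpha>1 x \<otimes>\<^bsub>A\<^esub> \<alpha>1 y) [^]\<^bsub>A\<^esub> u \<otimes>\<^bsub>A\<^esub> (\<alpha>2 x \<otimes>\<^bsub>A\<^esub> \<alpha>2 y) [^]\<^bsub>A\<^esub> v"
        unfolding \<alpha>_def using hom_mult[OF h1 x y] hom_mult[OF h2 x y] by simp
      also have "\<dots> = (\<alpha>1 x [^]\<^bsub>A\<^esub> u \<otimes>\<^bsub>A\<^esub> \<alpha>1 y [^]\<^bsub>A\<^esub> u) \<otimes>\<^bsub>A\<^esub> (\<alpha>2 x [^]\<^bsub>A\<^esub> v \<otimes>\<^bsub>A\<^esub> \<alpha>2 y [^]\<^bsub>A\<^esub> v)"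
        using c1[OF x] c1[OF y] c2[OF x] c2[OF y] by (simp add: A.int_pow_distrib)
      also have "\<dots> = \<alpha> x \<otimes>\<^bsub>A\<^esub> \<alpha> y"
        unfolding \<alpha>_def using c1[OF x] c1[OF y] c2[OF x] c2[OF y] by (simp add: A.m_ac)
      finally show "\<alpha> (x \<otimes> y) = \<alpha> x \<otimes>\<^bsub>A\<^esub> \<alpha> y" .
    qed
    moreover have "\<forall>k\<in>K. \<alpha> k = l k [^]\<^bsub>A\<^esub> (u * a + v * b)"
    proof
      fix k assume k: "k \<in> K"
      have "\<alpha> k = (l k [^]\<^bsub>A\<^esub> a) [^]\<^bsub>A\<^esub> u \<otimes>\<^bsub>A\<^esub> (l k [^]\<^bsub>A\<^esub> b) [^]\<^bsub>A\<^esub> v"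
        unfolding \<alpha>_def using e1 e2 k by simp
      also have "\<dots> = l k [^]\<^bsub>A\<^esub> (a * u) \<otimes>\<^bsub>A\<^esub> l k [^]\<^bsub>A\<^esub> (b * v)"
        using lA[OF k] by (simp add: A.int_pow_pow)
      also have "\<dots> = l k [^]\<^bsub>A\<^esub> (u * a + v * b)"
        using lA[OF k] by (simp add: A.int_pow_mult mult.commute)
      finally show "\<alpha> k = l k [^]\<^bsub>A\<^esub> (u * a + v * b)" .
    qed
    ultimately show ?thesis unfolding S_def by blast
  qed
  define Qn where "Qn = card (rcosets K)"
  have QnK: "Qn * card K = order G" unfolding Qn_def by (rule lagrange[OF sK])
  have o0: "0 < order G" by (rule order_gt_0_iff_finite[THEN iffD2, OF fin])
  have Qn0: "Qn > 0"
  proof (rule ccontr)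
    assume "\<not> Qn > 0" then have "Qn = 0" by simp
    with QnK o0 show False by simp
  qed
  have idx: "int (card (rcosets P)) \<in> S" if P: "subgroup P G" and KP: "K \<subseteq> P" and
      ext: "\<exists>\<mu>. hom_on G A P \<mu> \<and> (\<forall>k\<in>K. \<mu> k = l k)" for P
  proof -
    obtain \<mu> where mu: "hom_on G A P \<mu>" and me: "\<forall>k\<in>K. \<mu> k = l k" using ext by blast
    have minv: "\<forall>x\<in>carrier G. \<forall>k\<in>K. \<mu> (x \<otimes> k \<otimes> inv x) = \<mu> k"
    proof (intro ballI)
      fix x k assume x: "x \<in> carrier G" and k: "k \<in> K"
      have "x \<otimes> k \<otimes> inv x \<in> K" by (rule N.inv_op_closed2[OF x k])
      then show "\<mu> (x \<otimes> k \<otimes> inv x) = \<mu> k" using me linv x k by simp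
    qed
    obtain V where V: "V \<in> hom G A" "\<forall>k\<in>K. V k = \<mu> k [^]\<^bsub>A\<^esub> card (rcosets P)"
      using transfer[OF fin A P KP Kn mu minv] by blast
    have "\<forall>k\<in>K. V k = l k [^]\<^bsub>A\<^esub> int (card (rcosets P))"
      using V(2) me by (simp add: int_pow_int)
    then show ?thesis unfolding S_def using V(1) by blast
  qed
  have base: "int Qn \<in> S"
    unfolding Qn_def
  proof (rule idx[OF sK subset_refl])
    show "\<exists>\<mu>. hom_on G A K \<mu> \<and> (\<forall>k\<in>K. \<mu> k = l k)" using lam by blast
  qed
  have step: "\<exists>P. int (card (rcosets P)) \<in> S \<and> card (rcosets P) * q ^ multiplicity q Qn = Qn"
    if q: "Factorial_Ring.prime q" "q dvd Qn" for q
  proof -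
    obtain P g where P: "subgroup P G" "K \<subseteq> P" "g \<in> P" "\<forall>x\<in>P. \<exists>i::int. x \<otimes> g [^] (-i) \<in> K"
      "card (rcosets P) * q ^ multiplicity q Qn = Qn"
      using syl[OF q(1)] q(2) unfolding Qn_def by blast
    have "\<exists>\<mu>. hom_on G A P \<mu> \<and> (\<forall>k\<in>K. \<mu> k = l k)"
      by (rule cyc_ext[OF fin A D P(1) P(2) Kn lam linv P(3) P(4)])
    then have "int (card (rcosets P)) \<in> S" by (rule idx[OF P(1) P(2)])
    then show ?thesis using P(5) by blast
  qed
  have desc: "int d \<in> S \<Longrightarrow> 0 < d \<Longrightarrow> d dvd Qn \<Longrightarrow> 1 \<in> S" for d
  proof (induction d rule: less_induct)
    case (less d)
    show ?case
    proof (cases "d = 1")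
      case True then show ?thesis using less.prems by simp
    next
      case False
      then obtain q where q: "Factorial_Ring.prime q" "q dvd d" using prime_factor_nat by blast
      then have qQ: "q dvd Qn" using less.prems(3) dvd_trans by blast
      obtain P where P: "int (card (rcosets P)) \<in> S" "card (rcosets P) * q ^ multiplicity q Qn = Qn"
        using step[OF q(1) qQ] by blast
      define m where "m = card (rcosets P)"
      define e where "e = gcd d m"
      obtain u v where uv: "u * int d + v * int m = gcd (int d) (int m)" using bezout_int by blast
      have eS: "int e \<in> S" using comb[OF less.prems(1) P(1)[folded m_def], of u v] uv
        by (simp add: e_def gcd_int_int_eq)
      have e0: "0 < e" using less.prems(2) by (simp add: e_def)
      have eQ: "e dvd Qn" using less.prems(3) e_def dvd_trans by (metis gcd_dvd1)
      have "e \<noteq> d"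
      proof
        assume "e = d"
        then have "d dvd m" using e_def by (metis gcd_dvd2)
        then have "q dvd m" using q(2) dvd_trans by blast
        then have "q ^ Suc (multiplicity q Qn) dvd Qn"
          using P(2)[folded m_def] by (metis mult_dvd_mono power_Suc dvd_refl mult.commute)
        then have "Suc (multiplicity q Qn) \<le> multiplicity q Qn"
          using Qn0 q(1) by (intro multiplicity_geI) (auto simp: prime_def)
        then show False by simp
      qed
      moreover have "e \<le> d" using less.prems(2) e_def by (simp add: gcd_le1_nat)
      ultimately have "e < d" by simp
      then show ?thesis using less.IH eS e0 eQ by blast
    qed
  qed
  have "1 \<in> S" using desc[OF base Qn0] by simp
  then obtain \<alpha> where "\<alpha> \<in> hom G A" "\<forall>k\<in>K. \<alpha> k = l k [^]\<^bsub>A\<^esub> (1::int)" unfolding S_def by blast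
  then show ?thesis using lA by (metis A.int_pow_1)
qed

lemma (in group) sylow_quot:
  assumes fin: "finite (carrier G)" and Kn: "K \<lhd> G"
    and hyp: "\<And>(p::nat) P. Factorial_Ring.prime p \<Longrightarrow> p dvd order (G Mod K) \<Longrightarrow>
            sylow_subgroup (G Mod K) p P \<Longrightarrow> cyclic_group ((G Mod K)\<lparr>carrier := P\<rparr>)"
    and q: "Factorial_Ring.prime q" "q dvd card (rcosets K)"
  shows "\<exists>P g. subgroup P G \<and> K \<subseteq> P \<and> g \<in> P \<and> (\<forall>x\<in>P. \<exists>i::int. x \<otimes> g [^] (-i) \<in> K) \<and>
          card (rcosets P) * q ^ multiplicity q (card (rcosets K)) = card (rcosets K)"
proof -
  interpret N: normal K G by fact
  have sK: "subgroup K G" by (rule normal_imp_subgroup[OF Kn])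
  define Q where "Q = G Mod K"
  interpret Q: group Q unfolding Q_def by (rule N.factorgroup_is_group)
  have cQ: "carrier Q = rcosets K" unfolding Q_def FactGroup_def by simp
  have oQ: "order Q = card (rcosets K)" unfolding order_def cQ ..
  have finQ: "finite (carrier Q)" unfolding cQ
    using rcosets_subset_PowG[OF sK] fin by (rule finite_subset[OF _ finite_Pow_iff[THEN iffD2]])
  define a where "a = multiplicity q (order Q)"
  define m where "m = order Q div q ^ a"
  have "q ^ a dvd order Q" unfolding a_def by (rule multiplicity_dvd)
  then have "order Q = q ^ a * m" unfolding m_def by simp
  then obtain S where S: "subgroup S Q" "card S = q ^ a"
    using sylow_thm[OF q(1) Q.is_group _ finQ] by blast
  have "sylow_subgroup Q q S" using S by (simp add: sylow_subgroup_def a_def)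
  moreover have "q dvd order Q" using q(2) oQ by simp
  ultimately have cyc: "cyclic_group (Q\<lparr>carrier := S\<rparr>)" using hyp[OF q(1)] unfolding Q_def by blast
  interpret SG: group "Q\<lparr>carrier := S\<rparr>" by (rule Q.subgroup_imp_group[OF S(1)])
  obtain Xg where Xg: "Xg \<in> S" "S = range (\<lambda>n::int. Xg [^]\<^bsub>Q\<lparr>carrier := S\<rparr>\<^esub> n)"
    using cyc SG.cyclic_group by auto
  have XS: "S = range (\<lambda>n::int. Xg [^]\<^bsub>Q\<^esub> n)"
    using Xg Q.int_pow_consistent[OF S(1) Xg(1)] by simp
  have XQ: "Xg \<in> carrier Q" by (rule subgroup.mem_carrier[OF S(1) Xg(1)])
  then obtain g where g: "g \<in> carrier G" "Xg = K #> g" unfolding cQ RCOSETS_def by blast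
  define P where "P = \<Union>S"
  have S': "subgroup S (G Mod K)" using S(1) unfolding Q_def .
  have sP: "subgroup P G" unfolding P_def by (rule N.factgroup_subgroup_union_subgroup[OF S'])
  have Pchar: "P = {x \<in> carrier G. K #> x \<in> S}" unfolding P_def by (rule N.factgroup_subgroup_union_char[OF S'])
  have KP: "K \<subseteq> P"
  proof
    fix k assume k: "k \<in> K"
    have "K #> k = K" by (rule N.rcos_const[OF is_group k])
    moreover have "K \<in> S" using subgroup.one_closed[OF S(1)] unfolding Q_def by simp
    ultimately show "k \<in> P" unfolding Pchar using k N.subset by auto
  qed
  have gP: "g \<in> P" unfolding Pchar using g Xg(1) by simp
  have gen: "\<forall>x\<in>P. \<exists>i::int. x \<otimes> g [^] (-i) \<in> K"
  proof
    fix x assume "x \<in> P"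
    then have x: "x \<in> carrier G" "K #> x \<in> S" unfolding Pchar by auto
    then obtain i :: int where "K #> x = Xg [^]\<^bsub>Q\<^esub> i" using XS by blast
    also have "\<dots> = K #> (g [^] i)" unfolding g(2) Q_def by (rule N.FactGroup_int_pow[OF g(1)])
    finally have e: "K #> x = K #> (g [^] i)" .
    have "x \<in> K #> (g [^] i)" using rcos_self[OF x(1) sK] e by simp
    then have "x \<otimes> inv (g [^] i) \<in> K" using N.rcos_module[OF is_group] x(1) g(1) by simp
    moreover have "inv (g [^] i) = g [^] (-i)" using g(1) by (simp add: int_pow_neg)
    ultimately show "\<exists>i::int. x \<otimes> g [^] (-i) \<in> K" by auto
  qed
  have cardP: "card K * card S = card P"
    unfolding P_def
  proof (rule card_partition)
    show "finite S" by (rule finite_subset[OF subgroup.subset[OF S(1)] finQ])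
    show "finite (\<Union>S)" using finite_subset[OF subgroup.subset[OF sP] fin] unfolding P_def .
    show "card c = card K" if "c \<in> S" for c
    proof -
      have "c \<in> rcosets K" using subgroup.subset[OF S(1)] that unfolding cQ by blast
      then show ?thesis using card_rcosets_equal[OF _ N.subset] by simp
    qed
    show "c1 \<inter> c2 = {}" if "c1 \<in> S" "c2 \<in> S" "c1 \<noteq> c2" for c1 c2
    proof -
      have "c1 \<in> rcosets K" "c2 \<in> rcosets K" using subgroup.subset[OF S(1)] that(1,2) unfolding cQ by blast+
      then show ?thesis using rcos_disjoint[OF sK] that(3) unfolding pairwise_def disjnt_def by blast
    qed
  qed
  have l1: "card (rcosets P) * card P = order G" by (rule lagrange[OF sP])
  have l2: "card (rcosets K) * card K = order G" by (rule lagrange[OF sK])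
  have K0: "card K > 0"
  proof -
    have "finite K" by (rule finite_subset[OF N.subset fin])
    moreover have "\<one> \<in> K" by (rule subgroup.one_closed[OF sK])
    ultimately show ?thesis using card_gt_0_iff by blast
  qed
  have "card (rcosets P) * q ^ a * card K = card (rcosets K) * card K"
  proof -
    have cP: "card P = card K * q ^ a" using cardP S(2) by simp
    have "card (rcosets P) * q ^ a * card K = card (rcosets P) * card P" unfolding cP by (simp only: ac_simps)
    then show ?thesis using l1 l2 by simp
  qed
  then have "card (rcosets P) * q ^ a = card (rcosets K)" using K0 by simp
  then show ?thesis using sP KP gP gen unfolding a_def oQ by blast
qed

lemma (in comm_group) cancel_mid: "a \<in> carrier G \<Longrightarrow> b \<in> carrier G \<Longrightarrow> a \<otimes> (b \<otimes> inv a) = b"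
  by (metis m_lcomm inv_closed r_inv r_one)
lemma (in comm_group) cancel_left2:
  "a \<in> carrier G \<Longrightarrow> b \<in> carrier G \<Longrightarrow> c \<in> carrier G \<Longrightarrow> a \<otimes> b \<otimes> inv (a \<otimes> c) = b \<otimes> inv c"
proof -
  assume c: "a \<in> carrier G" "b \<in> carrier G" "c \<in> carrier G"
  then have "a \<otimes> b \<otimes> inv (a \<otimes> c) = a \<otimes> (b \<otimes> inv c \<otimes> inv a)" by (simp add: inv_mult m_assoc m_comm[of "inv a"])
  also have "\<dots> = b \<otimes> inv c" using c by (simp add: cancel_mid)
  finally show ?thesis .
qed
lemma (in comm_group) inv_split:
  "a \<in> carrier G \<Longrightarrow> b \<in> carrier G \<Longrightarrow> c \<in> carrier G \<Longrightarrow> d \<in> carrier G \<Longrightarrow>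
   a \<otimes> b \<otimes> inv (c \<otimes> d) = (a \<otimes> inv c) \<otimes> (b \<otimes> inv d)"
  by (simp add: inv_mult m_ac)

lemma main_ext:
  fixes G :: "('a, 'm) monoid_scheme" and H :: "('b, 'n) monoid_scheme" and A :: "('c, 'k) monoid_scheme"
  assumes grG: "group G" and grH: "group H" and fin: "finite (carrier G)"
    and sd: "subdirect G H U"
    and hyp: "\<And>(p::nat) P. Factorial_Ring.prime p \<Longrightarrow> p dvd order (G Mod (ker1 H U)) \<Longrightarrow>
            sylow_subgroup (G Mod (ker1 H U)) p P \<Longrightarrow> cyclic_group ((G Mod (ker1 H U))\<lparr>carrier := P\<rparr>)"
    and A: "comm_group A" and D: "divis A"
    and f: "f \<in> hom ((G \<times>\<times> H)\<lparr>carrier := U\<rparr>) A"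
  shows "\<exists>\<phi> \<in> hom (G \<times>\<times> H) A. \<forall>u \<in> U. \<phi> u = f u"
proof -
  interpret G: group G by fact
  interpret H: group H by fact
  interpret A: comm_group A by fact
  interpret GH: group "G \<times>\<times> H" by (rule DirProd_group[OF grG grH])
  have sU: "subgroup U (G \<times>\<times> H)" and p1: "proj1 U = carrier G" and p2: "proj2 U = carrier H"
    using sd unfolding subdirect_def by auto
  interpret U: subgroup U "G \<times>\<times> H" by (rule sU)
  have UGH: "u \<in> U \<Longrightarrow> u \<in> carrier G \<times> carrier H" for u using U.subset by auto
  have ex1: "\<exists>h. (g, h) \<in> U" if "g \<in> carrier G" for g using that p1 unfolding proj1_def by blast
  have ex2: "\<exists>g. (g, h) \<in> U" if "h \<in> carrier H" for h using that p2 unfolding proj2_def by blast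
  have fA: "u \<in> U \<Longrightarrow> f u \<in> carrier A" for u using f unfolding hom_def by auto
  have fm: "u \<in> U \<Longrightarrow> v \<in> U \<Longrightarrow> f (u \<otimes>\<^bsub>G \<times>\<times> H\<^esub> v) = f u \<otimes>\<^bsub>A\<^esub> f v" for u v
    using f unfolding hom_def by auto
  have Uinv: "(inv\<^bsub>G\<^esub> g, inv\<^bsub>H\<^esub> h) \<in> U" if "(g, h) \<in> U" for g h
  proof -
    have "inv\<^bsub>G \<times>\<times> H\<^esub> (g, h) \<in> U" using U.m_inv_closed[OF that] .
    moreover have "g \<in> carrier G" "h \<in> carrier H" using UGH[OF that] by auto
    ultimately show ?thesis using inv_DirProd[OF grG grH] by simp
  qed
  have Um: "(g \<otimes>\<^bsub>G\<^esub> g', h \<otimes>\<^bsub>H\<^esub> h') \<in> U" if "(g, h) \<in> U" "(g', h') \<in> U" for g h g' h'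
    using U.m_closed[OF that] by simp
  have U1: "(\<one>\<^bsub>G\<^esub>, \<one>\<^bsub>H\<^esub>) \<in> U" using U.one_closed by simp
  have f1: "f (\<one>\<^bsub>G\<^esub>, \<one>\<^bsub>H\<^esub>) = \<one>\<^bsub>A\<^esub>"
  proof -
    have "f (\<one>\<^bsub>G\<^esub>, \<one>\<^bsub>H\<^esub>) \<otimes>\<^bsub>A\<^esub> f (\<one>\<^bsub>G\<^esub>, \<one>\<^bsub>H\<^esub>) = f (\<one>\<^bsub>G\<^esub>, \<one>\<^bsub>H\<^esub>)"
      using fm[OF U1 U1] by simp
    then show ?thesis using fA[OF U1] by simp
  qed
  have finv: "f (inv\<^bsub>G\<^esub> g, inv\<^bsub>H\<^esub> h) = inv\<^bsub>A\<^esub> (f (g, h))" if u: "(g, h) \<in> U" for g h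
  proof -
    have gh: "g \<in> carrier G" "h \<in> carrier H" using UGH[OF u] by auto
    have "f (g, h) \<otimes>\<^bsub>A\<^esub> f (inv\<^bsub>G\<^esub> g, inv\<^bsub>H\<^esub> h) = \<one>\<^bsub>A\<^esub>"
      using fm[OF u Uinv[OF u]] gh f1 by simp
    then have "f (inv\<^bsub>G\<^esub> g, inv\<^bsub>H\<^esub> h) \<otimes>\<^bsub>A\<^esub> f (g, h) = \<one>\<^bsub>A\<^esub>"
      using fA[OF u] fA[OF Uinv[OF u]] by (simp add: A.m_comm)
    from A.inv_equality[OF this fA[OF u] fA[OF Uinv[OF u]]] show ?thesis by (rule sym)
  qed
  define K where "K = ker1 H U"
  have Kdef: "k \<in> K \<longleftrightarrow> (k, \<one>\<^bsub>H\<^esub>) \<in> U" for k unfolding K_def ker1_def by simp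
  have KG: "k \<in> K \<Longrightarrow> k \<in> carrier G" for k using Kdef UGH by blast
  have sK: "subgroup K G"
  proof
    show "K \<subseteq> carrier G" using KG by blast
    show "x \<otimes>\<^bsub>G\<^esub> y \<in> K" if "x \<in> K" "y \<in> K" for x y
      using Um[of x "\<one>\<^bsub>H\<^esub>" y "\<one>\<^bsub>H\<^esub>"] that Kdef by simp
    show "\<one>\<^bsub>G\<^esub> \<in> K" using U1 Kdef by simp
    show "inv\<^bsub>G\<^esub> x \<in> K" if "x \<in> K" for x
      using Uinv[of x "\<one>\<^bsub>H\<^esub>"] that Kdef by simp
  qed
  have conjU: "(x \<otimes>\<^bsub>G\<^esub> k \<otimes>\<^bsub>G\<^esub> inv\<^bsub>G\<^esub> x, \<one>\<^bsub>H\<^esub>) \<in> U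
      \<and> f (x \<otimes>\<^bsub>G\<^esub> k \<otimes>\<^bsub>G\<^esub> inv\<^bsub>G\<^esub> x, \<one>\<^bsub>H\<^esub>) = f (k, \<one>\<^bsub>H\<^esub>)"
    if x: "x \<in> carrier G" and k: "k \<in> K" for x k
  proof -
    obtain h where xh: "(x, h) \<in> U" using ex1[OF x] by blast
    have hH: "h \<in> carrier H" using UGH[OF xh] by auto
    have k1: "(k, \<one>\<^bsub>H\<^esub>) \<in> U" using k Kdef by simp
    have m1: "(x \<otimes>\<^bsub>G\<^esub> k, h \<otimes>\<^bsub>H\<^esub> \<one>\<^bsub>H\<^esub>) \<in> U" by (rule Um[OF xh k1])
    have m2: "(x \<otimes>\<^bsub>G\<^esub> k \<otimes>\<^bsub>G\<^esub> inv\<^bsub>G\<^esub> x, h \<otimes>\<^bsub>H\<^esub> \<one>\<^bsub>H\<^esub> \<otimes>\<^bsub>H\<^esub> inv\<^bsub>H\<^esub> h) \<in> U"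
      by (rule Um[OF m1 Uinv[OF xh]])
    have eqh: "h \<otimes>\<^bsub>H\<^esub> \<one>\<^bsub>H\<^esub> \<otimes>\<^bsub>H\<^esub> inv\<^bsub>H\<^esub> h = \<one>\<^bsub>H\<^esub>" using hH by simp
    have in1: "(x \<otimes>\<^bsub>G\<^esub> k \<otimes>\<^bsub>G\<^esub> inv\<^bsub>G\<^esub> x, \<one>\<^bsub>H\<^esub>) \<in> U" using m2 unfolding eqh .
    have "f (x \<otimes>\<^bsub>G\<^esub> k \<otimes>\<^bsub>G\<^esub> inv\<^bsub>G\<^esub> x, h \<otimes>\<^bsub>H\<^esub> \<one>\<^bsub>H\<^esub> \<otimes>\<^bsub>H\<^esub> inv\<^bsub>H\<^esub> h)
        = f (x, h) \<otimes>\<^bsub>A\<^esub> f (k, \<one>\<^bsub>H\<^esub>) \<otimes>\<^bsub>A\<^esub> inv\<^bsub>A\<^esub> (f (x, h))"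
      using fm[OF m1 Uinv[OF xh]] fm[OF xh k1] finv[OF xh] by simp
    also have "\<dots> = f (k, \<one>\<^bsub>H\<^esub>)"
      using fA[OF xh] fA[OF k1] by (simp add: A.m_assoc A.cancel_mid)
    finally show ?thesis using in1 unfolding eqh by simp
  qed
  have Kn: "K \<lhd> G"
    by (rule G.normal_invI[OF sK]) (use conjU Kdef in blast)
  define l where "l k = f (k, \<one>\<^bsub>H\<^esub>)" for k
  have lam: "hom_on G A K l"
    unfolding hom_on_def l_def
  proof (intro conjI ballI)
    fix x assume "x \<in> K" then show "f (x, \<one>\<^bsub>H\<^esub>) \<in> carrier A" using fA Kdef by blast
  next
    fix x y assume x: "x \<in> K" and y: "y \<in> K"
    show "f (x \<otimes>\<^bsub>G\<^esub> y, \<one>\<^bsub>H\<^esub>) = f (x, \<one>\<^bsub>H\<^esub>) \<otimes>\<^bsub>A\<^esub> f (y, \<one>\<^bsub>H\<^esub>)"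
      using fm[of "(x, \<one>\<^bsub>H\<^esub>)" "(y, \<one>\<^bsub>H\<^esub>)"] x y Kdef by simp
  qed
  have linv: "\<forall>x\<in>carrier G. \<forall>k\<in>K. l (x \<otimes>\<^bsub>G\<^esub> k \<otimes>\<^bsub>G\<^esub> inv\<^bsub>G\<^esub> x) = l k"
    unfolding l_def using conjU by blast
  have syl: "\<exists>P g. subgroup P G \<and> K \<subseteq> P \<and> g \<in> P \<and> (\<forall>x\<in>P. \<exists>i::int. x \<otimes>\<^bsub>G\<^esub> g [^]\<^bsub>G\<^esub> (-i) \<in> K) \<and>
          card (rcosets\<^bsub>G\<^esub> P) * q ^ multiplicity q (card (rcosets\<^bsub>G\<^esub> K)) = card (rcosets\<^bsub>G\<^esub> K)"
    if "Factorial_Ring.prime q" "q dvd card (rcosets\<^bsub>G\<^esub> K)" for q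
    using G.sylow_quot[OF fin Kn _ that] hyp unfolding K_def by blast
  obtain \<alpha> where ah: "\<alpha> \<in> hom G A" and ae: "\<forall>k\<in>K. \<alpha> k = l k"
    using G.ext_lemma[OF fin A D Kn lam linv syl] by blast
  have aA: "x \<in> carrier G \<Longrightarrow> \<alpha> x \<in> carrier A" for x using ah by (rule hom_in_carrier)
  have am: "x \<in> carrier G \<Longrightarrow> y \<in> carrier G \<Longrightarrow> \<alpha> (x \<otimes>\<^bsub>G\<^esub> y) = \<alpha> x \<otimes>\<^bsub>A\<^esub> \<alpha> y" for x y
    using ah by (rule hom_mult)
  define \<gamma> where "\<gamma> h = (SOME g. (g, h) \<in> U)" for h
  have gam: "h \<in> carrier H \<Longrightarrow> (\<gamma> h, h) \<in> U" for h
    unfolding \<gamma>_def using ex2 by (metis someI_ex)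
  define \<beta> where "\<beta> h = f (\<gamma> h, h) \<otimes>\<^bsub>A\<^esub> inv\<^bsub>A\<^esub> (\<alpha> (\<gamma> h))" for h
  have bwd: "\<beta> h = f (g, h) \<otimes>\<^bsub>A\<^esub> inv\<^bsub>A\<^esub> (\<alpha> g)" if u: "(g, h) \<in> U" for g h
  proof -
    have gh: "g \<in> carrier G" "h \<in> carrier H" using UGH[OF u] by auto
    define g0 where "g0 = \<gamma> h"
    have u0: "(g0, h) \<in> U" unfolding g0_def using gam gh by simp
    have g0G: "g0 \<in> carrier G" using UGH[OF u0] by auto
    define k where "k = g \<otimes>\<^bsub>G\<^esub> inv\<^bsub>G\<^esub> g0"
    have "(g \<otimes>\<^bsub>G\<^esub> inv\<^bsub>G\<^esub> g0, h \<otimes>\<^bsub>H\<^esub> inv\<^bsub>H\<^esub> h) \<in> U" by (rule Um[OF u Uinv[OF u0]])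
    then have kK: "k \<in> K" unfolding Kdef k_def using gh by simp
    have kG: "k \<in> carrier G" using KG[OF kK] .
    have geq: "g = k \<otimes>\<^bsub>G\<^esub> g0" unfolding k_def using gh g0G by (simp add: G.m_assoc)
    have k1: "(k, \<one>\<^bsub>H\<^esub>) \<in> U" using kK Kdef by simp
    have "f (g, h) = f ((k, \<one>\<^bsub>H\<^esub>) \<otimes>\<^bsub>G \<times>\<times> H\<^esub> (g0, h))" using geq gh by simp
    also have "\<dots> = \<alpha> k \<otimes>\<^bsub>A\<^esub> f (g0, h)" using fm[OF k1 u0] ae kK l_def by simp
    finally have fg: "f (g, h) = \<alpha> k \<otimes>\<^bsub>A\<^esub> f (g0, h)" .
    have ag: "\<alpha> g = \<alpha> k \<otimes>\<^bsub>A\<^esub> \<alpha> g0" using geq am[OF kG g0G] by simp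
    have "f (g, h) \<otimes>\<^bsub>A\<^esub> inv\<^bsub>A\<^esub> (\<alpha> g) = f (g0, h) \<otimes>\<^bsub>A\<^esub> inv\<^bsub>A\<^esub> (\<alpha> g0)"
      unfolding fg ag using aA[OF kG] fA[OF u0] aA[OF g0G]
      by (rule A.cancel_left2)
    then show ?thesis unfolding \<beta>_def g0_def by simp
  qed
  have bA: "\<beta> h \<in> carrier A" if h: "h \<in> carrier H" for h
  proof -
    have u: "(\<gamma> h, h) \<in> U" by (rule gam[OF h])
    have "\<gamma> h \<in> carrier G" using UGH[OF u] by auto
    then show ?thesis unfolding \<beta>_def by (intro A.m_closed fA[OF u] A.inv_closed aA)
  qed
  have bhom: "\<beta> \<in> hom H A"
  proof (rule homI)
    fix h assume "h \<in> carrier H" then show "\<beta> h \<in> carrier A" by (rule bA)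
  next
    fix h h' assume h: "h \<in> carrier H" and h': "h' \<in> carrier H"
    obtain g where u: "(g, h) \<in> U" using ex2[OF h] by blast
    obtain g' where u': "(g', h') \<in> U" using ex2[OF h'] by blast
    have gG: "g \<in> carrier G" "g' \<in> carrier G" using UGH[OF u] UGH[OF u'] by auto
    have uu: "(g \<otimes>\<^bsub>G\<^esub> g', h \<otimes>\<^bsub>H\<^esub> h') \<in> U" by (rule Um[OF u u'])
    have "\<beta> (h \<otimes>\<^bsub>H\<^esub> h') = f (g, h) \<otimes>\<^bsub>A\<^esub> f (g', h') \<otimes>\<^bsub>A\<^esub> inv\<^bsub>A\<^esub> (\<alpha> g \<otimes>\<^bsub>A\<^esub> \<alpha> g')"
      using bwd[OF uu] fm[OF u u'] am[OF gG] by simp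
    also have "\<dots> = \<beta> h \<otimes>\<^bsub>A\<^esub> \<beta> h'"
      unfolding bwd[OF u] bwd[OF u'] using fA[OF u] fA[OF u'] aA[OF gG(1)] aA[OF gG(2)]
      by (rule A.inv_split)
    finally show "\<beta> (h \<otimes>\<^bsub>H\<^esub> h') = \<beta> h \<otimes>\<^bsub>A\<^esub> \<beta> h'" .
  qed
  define \<phi> where "\<phi> u = \<alpha> (fst u) \<otimes>\<^bsub>A\<^esub> \<beta> (snd u)" for u
  have "\<phi> \<in> hom (G \<times>\<times> H) A"
  proof (rule homI)
    fix u assume "u \<in> carrier (G \<times>\<times> H)"
    then show "\<phi> u \<in> carrier A" unfolding \<phi>_def using aA bA by auto
  next
    fix u v assume u: "u \<in> carrier (G \<times>\<times> H)" and v: "v \<in> carrier (G \<times>\<times> H)"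
    obtain g h where uu: "u = (g, h)" by (cases u)
    obtain g' h' where vv: "v = (g', h')" by (cases v)
    have c: "g \<in> carrier G" "h \<in> carrier H" "g' \<in> carrier G" "h' \<in> carrier H" using u v uu vv by auto
    have "\<phi> (u \<otimes>\<^bsub>G \<times>\<times> H\<^esub> v) = \<alpha> g \<otimes>\<^bsub>A\<^esub> \<alpha> g' \<otimes>\<^bsub>A\<^esub> (\<beta> h \<otimes>\<^bsub>A\<^esub> \<beta> h')"
      unfolding \<phi>_def uu vv using am[OF c(1,3)] hom_mult[OF bhom c(2,4)] by simp
    also have "\<dots> = \<phi> u \<otimes>\<^bsub>A\<^esub> \<phi> v"
      unfolding \<phi>_def uu vv using aA[OF c(1)] aA[OF c(3)] bA[OF c(2)] bA[OF c(4)] by (simp add: A.m_ac)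
    finally show "\<phi> (u \<otimes>\<^bsub>G \<times>\<times> H\<^esub> v) = \<phi> u \<otimes>\<^bsub>A\<^esub> \<phi> v" .
  qed
  moreover have "\<forall>u\<in>U. \<phi> u = f u"
  proof
    fix u assume u: "u \<in> U"
    obtain g h where uu: "u = (g, h)" by (cases u)
    have gh: "(g, h) \<in> U" using u uu by simp
    have gG: "g \<in> carrier G" using UGH[OF gh] by auto
    have "\<phi> u = \<alpha> g \<otimes>\<^bsub>A\<^esub> (f (g, h) \<otimes>\<^bsub>A\<^esub> inv\<^bsub>A\<^esub> (\<alpha> g))"
      unfolding \<phi>_def uu using bwd[OF gh] by simp
    also have "\<dots> = f (g, h)" using aA[OF gG] fA[OF gh] by (rule A.cancel_mid)
    finally show "\<phi> u = f u" using uu by simp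
  qed
  ultimately show ?thesis by blast
qed

theorem corollary4p1:
  fixes G :: "'a monoid" and H :: "'b monoid" and U :: "('a \<times> 'b) set"
  assumes "group G" and "group H"
    and "finite (carrier G)" and "finite (carrier H)"
    and "subdirect G H U"
    and "\<And>(p::nat) P. Factorial_Ring.prime p \<Longrightarrow> p dvd order (goursat_quot G H U) \<Longrightarrow>
            sylow_subgroup (goursat_quot G H U) p P \<Longrightarrow>
            cyclic_group ((goursat_quot G H U)\<lparr>carrier := P\<rparr>)"
  shows "\<forall>A :: 'c monoid. satisfies_hypothesis A \<longrightarrow> A_extensible G H A U"
proof (intro allI impI)
  fix A :: "'c monoid" assume sh: "satisfies_hypothesis A"
  then have cA: "comm_group A" and "\<exists>\<pi>. hypothesis_with A \<pi>"
    unfolding satisfies_hypothesis_def by auto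
  then obtain \<pi> where hw: "hypothesis_with A \<pi>" by blast
  have D: "divis A" unfolding divis_def using comm_group.divisible[OF cA hw] by blast
  have p1: "proj1 U = carrier G" using assms(5) unfolding subdirect_def by blast
  have gq: "goursat_quot G H U = G Mod (ker1 H U)" unfolding goursat_quot_def p1 by simp
  have hyp: "\<And>(p::nat) P. Factorial_Ring.prime p \<Longrightarrow> p dvd order (G Mod (ker1 H U)) \<Longrightarrow>
            sylow_subgroup (G Mod (ker1 H U)) p P \<Longrightarrow> cyclic_group ((G Mod (ker1 H U))\<lparr>carrier := P\<rparr>)"
    using assms(6) unfolding gq .
  show "A_extensible G H A U" unfolding A_extensible_def
  proof (intro ballI)
    fix f assume f: "f \<in> hom ((G \<times>\<times> H)\<lparr>carrier := U\<rparr>) A"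
    show "\<exists>\<phi>\<in>hom (G \<times>\<times> H) A. \<forall>u\<in>U. \<phi> u = f u"
    proof (rule main_ext[OF assms(1,2,3,5) _ cA D f])
      fix p P
      assume "Factorial_Ring.prime p" "p dvd order (G Mod (ker1 H U))" "sylow_subgroup (G Mod (ker1 H U)) p P"
      then show "cyclic_group ((G Mod (ker1 H U))\<lparr>carrier := P\<rparr>)" by (rule hyp)
    qed
  qed
qed


end
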